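(* Let $p,q$ be positive integers with $p+q$ odd. For all $n\ge3$ and all $g\in\mathcal{J}^{p,q}_n$, $\psi_n(g)\equiv\psi_{n-1}(g_L)+\psi_{n-1}(g_R)\pmod 2$.
   Context: Let $p,q$ be positive integers with $p+q$ odd. $\mathbb{Z}_{2^k}$ denotes the integers modulo $2^k$ ($\mathbb{Z}_1$ trivial); as $p+q$ is odd, division by $p+q$ and $(p+q)^2$ is well defined in $\mathbb{Z}_{2^k}$. For $m\ge1$, $D_{2m}$ is the dihedral group of order $2m$, realized as pairs $(f,x)$, $f\in\mathbb{Z}_2$, $x\in\mathbb{Z}_m$, with product $(f_1,x_1)(f_2,x_2)=(f_1+f_2,x_1+(-1)^{f_1}x_2)$. Define $\Phi:D_{2m}\to D_{2m}$, $\Phi((f,x))=(f,\delta(f=1)(p+q)(p-q)-x)$, where $\delta(f=1)$ is $1$ if $f=1$ and $0$ otherwise. $\mathrm{Aut}(T_1)$ is trivial; for $k\ge1$, $\mathrm{Aut}(T_{k+1})$ is the set of triples $g=(g_f,g_L,g_R)$, $g_f\in\mathbb{Z}_2$, $g_L,g_R\in\mathrm{Aut}(T_k)$, with product $(f,A,B)(g,C,D)=(f+g,AC,BD)$ if $f=0$ and $(f+g,AD,BC)$ if $f=1$; subscripts chain ($g_{LR}=(g_L)_R$, $g_{Lf}=(g_L)_f$). Recursively: $\mathcal{J}_1=\mathrm{Aut}(T_2)$, $\psi_1=0$, $\Delta_1(g)=(g_f,0)$; $\mathcal{J}_2=\{g\in\mathrm{Aut}(T_3):g_L=g_R\}$,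 $\psi_2(g)=\delta(g_{Lf}=1)\in\mathbb{Z}_2$, $\Delta_2(g)=(g_f,\psi_2(g))$; for $n\ge3$, $\mathcal{J}_n=\{g\in\mathrm{Aut}(T_{n+1}):g_L,g_R\in\mathcal{J}_{n-1},\ \Delta_{n-1}(g_L)=\Phi(\Delta_{n-1}(g_R))\}$, with $\psi_n:\mathcal{J}_n\to\mathbb{Z}_{2^{\lfloor n/2\rfloor}}$ given by $\psi_n(g)=(\psi_{n-1}(g_L)+\psi_{n-1}(g_R))/(p+q)$ for odd $n$ and $\psi_n(g)=\big(2(\psi_{n-2}(g_{LL})+\psi_{n-2}(g_{RL}))-\delta(g_{Lf}=1)(p+q)(p-q)\big)/(p+q)^2$ for even $n$ (with $2\psi_{n-2}(\cdot)$ read in $\mathbb{Z}_{2^{n/2}}$), and $\Delta_n:\mathcal{J}_n\to D_{2^{\lfloor n/2\rfloor+1}}$ given by $\Delta_n(g)=(g_f,\psi_{n-1}(g_L)-\psi_{n-1}(g_R))$ for odd $n$ and $\Delta_n(g)=(g_f,(p+q)\psi_n(g)-2\psi_{n-1}(g_R))$ for even $n$. In the claim all values are reduced modulo $2$. *)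

theory Defs
  imports "HOL-Number_Theory.Cong"
begin

text \<open>Elements of Aut(T_k) are represented as full binary trees of labels:
  Node f L R stands for the triple (g_f, g_L, g_R); Leaf is the trivial automorphism of T_1.\<close>
datatype atree = Leaf | Node bool atree atree

fun isAut :: "nat \<Rightarrow> atree \<Rightarrow> bool" where
  "isAut 0 t = False"
| "isAut (Suc 0) t = (t = Leaf)"
| "isAut (Suc (Suc k)) t =
     (case t of Leaf \<Rightarrow> False | Node f L R \<Rightarrow> isAut (Suc k) L \<and> isAut (Suc k) R)"

text \<open>Components: g_f (True means g_f = 1), g_L, g_R.\<close>
fun gf :: "atree \<Rightarrow> bool" where
  "gf Leaf = False" | "gf (Node f L R) = f"
fun gL :: "atree \<Rightarrow> atree" where
  "gL Leaf = Leaf" | "gL (Node f L R) = L"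
fun gR :: "atree \<Rightarrow> atree" where
  "gR Leaf = Leaf" | "gR (Node f L R) = R"

text \<open>Division b / a in Z_m (m = 2^k, a odd), with the result given by its
  representative in [0, m).\<close>
definition zdivm :: "int \<Rightarrow> int \<Rightarrow> int \<Rightarrow> int" where
  "zdivm m b a = (THE x. 0 \<le> x \<and> x < m \<and> [a * x = b] (mod m))"

text \<open>psi p q n g : value of psi_n(g) in Z_{2^(n div 2)}, as representative in [0, 2^(n div 2)).\<close>
function psi :: "int \<Rightarrow> int \<Rightarrow> nat \<Rightarrow> atree \<Rightarrow> int" where
  "psi p q n g =
    (if n \<le> 1 then 0
     else if n = 2 then (if gf (gL g) then 1 else 0)
     else if odd n then
       zdivm (2 ^ (n div 2)) (psi p q (n - 1) (gL g) + psi p q (n - 1) (gR g)) (p + q)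
     else
       zdivm (2 ^ (n div 2))
         (2 * (psi p q (n - 2) (gL (gL g)) + psi p q (n - 2) (gL (gR g)))
           - (if gf (gL g) then (p + q) * (p - q) else 0))
         ((p + q) ^ 2))"
  by pat_completeness auto
termination by (relation "measure (\<lambda>(p, q, n, g). n)") auto

text \<open>Delta p q n g : Delta_n(g) in D_{2m}, m = 2^(n div 2), as pair (f, x) with x in [0, m).\<close>
definition Delta :: "int \<Rightarrow> int \<Rightarrow> nat \<Rightarrow> atree \<Rightarrow> bool \<times> int" where
  "Delta p q n g =
    (if n \<le> 1 then (gf g, 0)
     else if n = 2 then (gf g, psi p q 2 g)
     else if odd n then
       (gf g, (psi p q (n - 1) (gL g) - psi p q (n - 1) (gR g)) mod 2 ^ (n div 2))
     else
       (gf g, ((p + q) * psi p q n g - 2 * psi p q (n - 1) (gR g)) mod 2 ^ (n div 2)))"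

definition Phi :: "int \<Rightarrow> int \<Rightarrow> int \<Rightarrow> bool \<times> int \<Rightarrow> bool \<times> int" where
  "Phi p q m d = (fst d, ((if fst d then (p + q) * (p - q) else 0) - snd d) mod m)"

fun inJ :: "int \<Rightarrow> int \<Rightarrow> nat \<Rightarrow> atree \<Rightarrow> bool" where
  "inJ p q 0 g = False"
| "inJ p q (Suc 0) g = isAut 2 g"
| "inJ p q (Suc (Suc 0)) g = (isAut 3 g \<and> gL g = gR g)"
| "inJ p q (Suc (Suc (Suc k))) g =
     (isAut (k + 4) g \<and> inJ p q (Suc (Suc k)) (gL g) \<and> inJ p q (Suc (Suc k)) (gR g) \<and>
      Delta p q (Suc (Suc k)) (gL g) =
        Phi p q (2 ^ (Suc (Suc k) div 2)) (Delta p q (Suc (Suc k)) (gR g)))"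

end

theory Submission
  imports Defs
begin

declare psi.simps[simp del]

lemma coprime_odd_pow2: "odd (a::int) \<Longrightarrow> coprime a (2 ^ k)"
  by (simp add: coprime_commute)

lemma zdivm_spec:
  assumes "odd (a::int)"
  shows "[a * zdivm (2 ^ k) b a = b] (mod 2 ^ k)"
proof -
  let ?m = "(2::int) ^ k"
  have cop: "coprime a ?m" using assms by (simp add: coprime_commute)
  obtain y where y: "[a * y = 1] (mod ?m)" using cong_solve_coprime_int[OF cop] by blast
  define x where "x = (y * b) mod ?m"
  have x1: "0 \<le> x" "x < ?m" unfolding x_def by auto
  have c1: "[a * x = a * (y * b)] (mod ?m)" unfolding x_def
    by (simp add: cong_def mod_mult_right_eq)
  have c2: "[a * (y * b) = 1 * b] (mod ?m)"
    using cong_mult[OF y cong_refl[of b]] by (simp add: ac_simps)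
  have x2: "[a * x = b] (mod ?m)" using cong_trans[OF c1 c2] by simp
  have uniq: "z = x" if "0 \<le> z" "z < ?m" "[a * z = b] (mod ?m)" for z
  proof -
    have "[a * z = a * x] (mod ?m)" using cong_trans[OF that(3) cong_sym[OF x2]] .
    then have "[z = x] (mod ?m)" using cong_mult_lcancel[OF cop] by simp
    then show ?thesis using cong_less_imp_eq_int[OF that(1,2) x1] by simp
  qed
  have "zdivm ?m b a = x" unfolding zdivm_def
    apply (rule the_equality)
    using x1 x2 apply simp
    using uniq by blast
  then show ?thesis using x2 by simp
qed

lemma zdivm_par:
  assumes "odd (a::int)" "k \<ge> 1"
  shows "zdivm (2 ^ k) b a mod 2 = b mod 2"
proof -
  have "[a * zdivm (2 ^ k) b a = b] (mod 2 ^ k)" by (rule zdivm_spec[OF assms(1)])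
  moreover have "(2::int) dvd 2 ^ k" using assms(2) by (simp add: dvd_power)
  ultimately have "[a * zdivm (2 ^ k) b a = b] (mod 2)" using cong_dvd_modulus by blast
  then have "(a * zdivm (2 ^ k) b a) mod 2 = b mod 2" by (simp add: cong_def)
  moreover have "a mod 2 = 1" using assms(1) by presburger
  ultimately show ?thesis by (metis mod_mult_left_eq mult_1)
qed

lemma odd_case:
  assumes "odd (p + q)" "odd n" "n \<ge> 3"
  shows "psi p q n g mod 2 = (psi p q (n - 1) (gL g) + psi p q (n - 1) (gR g)) mod 2"
proof -
  have "psi p q n g = zdivm (2 ^ (n div 2)) (psi p q (n - 1) (gL g) + psi p q (n - 1) (gR g)) (p + q)"
    using assms by (subst psi.simps) simp
  moreover have "n div 2 \<ge> 1" using assms by auto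
  ultimately show ?thesis using zdivm_par[OF assms(1)] by simp
qed

lemma arith4:
  fixes a b c d e x y z :: int
  assumes "x mod 2 = (2 * (a + c) - e) mod 2" "y mod 2 = (a + b) mod 2"
    "z mod 2 = (c + d) mod 2" "(a - b) mod 2 = (e - (c - d)) mod 2"
  shows "x mod 2 = (y + z) mod 2"
  using assms by presburger

theorem lemma7:
  fixes p q :: int and n :: nat and g :: atree
  assumes "p > 0" and "q > 0" and "odd (p + q)"
    and "n \<ge> 3" and "inJ p q n g"
  shows "[psi p q n g = psi p q (n - 1) (gL g) + psi p q (n - 1) (gR g)] (mod 2)"
proof (cases "odd n")
  case True
  then show ?thesis using odd_case[OF assms(3) True assms(4)] by (simp add: cong_def)
next
  case False
  then have n4: "n \<ge> 4" using assms(4) by presburger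
  define k where "k = n - 3"
  have nk: "n = Suc (Suc (Suc k))" using n4 k_def by simp
  define j where "j = Suc (Suc k) div 2"
  have j1: "j \<ge> 1" using n4 nk j_def by simp
  have oddm: "odd (Suc (Suc k))" using False nk by simp
  let ?A = "psi p q (Suc k) (gL (gL g))"
  let ?B = "psi p q (Suc k) (gR (gL g))"
  let ?C = "psi p q (Suc k) (gL (gR g))"
  let ?D = "psi p q (Suc k) (gR (gR g))"
  define E where "E = (if gf (gL g) then (p + q) * (p - q) else 0)"
  define E' where "E' = (if gf (gR g) then (p + q) * (p - q) else 0)"
  have h: "inJ p q (Suc (Suc (Suc k))) g" using assms(5) unfolding nk .
  have eq: "Delta p q (Suc (Suc k)) (gL g) = Phi p q (2 ^ j) (Delta p q (Suc (Suc k)) (gR g))"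
    using h[unfolded inJ.simps(4)] unfolding j_def by blast
  have r1: "(Suc (Suc k) \<le> 1) = False" "(Suc (Suc k) = 2) = False" "odd (Suc (Suc k)) = True"
    "Suc (Suc k) - 1 = Suc k" "Suc (Suc k) div 2 = j"
    using oddm n4 nk j_def by auto
  have dL: "Delta p q (Suc (Suc k)) (gL g) = (gf (gL g), (?A - ?B) mod 2 ^ j)"
    unfolding Delta_def by (simp only: r1 if_False if_True)
  have dR: "Delta p q (Suc (Suc k)) (gR g) = (gf (gR g), (?C - ?D) mod 2 ^ j)"
    unfolding Delta_def by (simp only: r1 if_False if_True)
  have ph: "Phi p q (2 ^ j) (Delta p q (Suc (Suc k)) (gR g)) =
     (gf (gR g), (E' - (?C - ?D) mod 2 ^ j) mod 2 ^ j)"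
    unfolding dR Phi_def E'_def by simp
  have ff: "gf (gL g) = gf (gR g)"
    and ee: "(?A - ?B) mod 2 ^ j = (E' - (?C - ?D) mod 2 ^ j) mod 2 ^ j"
    using eq unfolding dL ph by simp_all
  have EE: "E' = E" unfolding E'_def E_def using ff by simp
  have d2: "(2::int) dvd 2 ^ j" using j1 by (simp add: dvd_power)
  have "(?A - ?B) mod 2 = ((?A - ?B) mod 2 ^ j) mod 2" using d2 by (simp add: mod_mod_cancel)
  also have "\<dots> = (E - (?C - ?D) mod 2 ^ j) mod 2" using ee d2 EE by (simp add: mod_mod_cancel)
  also have "\<dots> = (E - (?C - ?D)) mod 2"
    using d2 by (metis mod_diff_right_eq mod_mod_cancel)
  finally have key: "(?A - ?B) mod 2 = (E - (?C - ?D)) mod 2" .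
  have psin: "psi p q n g = zdivm (2 ^ (n div 2)) (2 * (?A + ?C) - E) ((p + q) ^ 2)"
    using n4 False nk unfolding E_def by (subst psi.simps) simp
  have o2: "odd ((p + q) ^ 2)" using assms(3) by simp
  have "n div 2 \<ge> 1" using n4 by simp
  then have P1: "psi p q n g mod 2 = (2 * (?A + ?C) - E) mod 2"
    using psin zdivm_par[OF o2] by simp
  have P2: "psi p q (n - 1) (gL g) mod 2 = (?A + ?B) mod 2"
    using odd_case[OF assms(3) oddm] nk n4 by simp
  have P3: "psi p q (n - 1) (gR g) mod 2 = (?C + ?D) mod 2"
    using odd_case[OF assms(3) oddm] nk n4 by simp
  show ?thesis unfolding cong_def using arith4[OF P1 P2 P3 key] .
qed

end
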